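(* Let $Config=(R,F,M,I)$ be a configuration of legal rules and let $ASP_{Config}$ be its answer set program encoding (both defined in the context). Let $A_{Config}$ be any answer set (stable model) of $ASP_{Config}$, and let $S_{A_{Config}}$ be the set of all atoms of the forms $is\_legal(\cdot)$ and $legally\_valid(\cdot,\cdot)$ belonging to $A_{Config}$. Then $S_{A_{Config}}$ is a legal model of $Config$.
   Context: A configuration is a tuple $Config=(R,F,M,I)$ where: $R$ is a finite set of rules, each rule $r$ having a unique integer id (also denoted $r$), a precondition $pre\_con(r)$ which is a conjunction $b_1\wedge\dots\wedge b_m\wedge not\ b_{m+1}\wedge\dots\wedge not\ b_n$ of ground atoms and negation-as-failure literals, and a conclusion $C_r$ which is a single ground atom; $F$ is a finite set of ground atoms (facts); $M$ is a finite set of ground atoms of the forms $despite(r_i,r_j)$, $subject\_to(r_i,r_j)$, $strong\_subject\_to(r_i,r_j)$ with $r_i,r_j$ rule ids; $I$ is a finite collection of finite sets of ground atoms ("minimal inconsistent sets"), each containing at least 2 atoms. For a set $S$ of atoms, $S\models is\_legal(pre\_con(r))$ means: $is\_legal(b_i)\in S$ for every positive atom $b_i$ of $pre\_con(r)$ and $is\_legal(b_j)\notin S$ for every negated atom $not\ b_j$; for a set of atoms $A$, $is\_legal(A)=\{is\_legal(a): a\in A\}$. A set $S$ of atoms of the forms $is\_legal(c)$ and $legally\_valid(r,c)$ is a legal model of $Config$ iff: (A1) $is\_legal(f)\in S$ for all $f\in F$; (A2) for all $r\in R$, if $legally\_valid(r,C_r)\in S$ then $S\models is\_legal(pre\_con(r))$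 and $is\_legal(C_r)\in S$; (A3) for all $c$, if $is\_legal(c)\in S$ then $c\in F$ or there is $r\in R$ with $legally\_valid(r,C_r)\in S$ and $c=C_r$; (A4) for all $r_i,r_j\in R$, if $despite(r_i,r_j)\in M$ and $S\models is\_legal(pre\_con(r_j))$ then $legally\_valid(r_i,C_{r_i})\notin S$; (A5) for all $r_i,r_j\in R$, if $strong\_subject\_to(r_i,r_j)\in M$ and $legally\_valid(r_i,C_{r_i})\in S$ then $legally\_valid(r_j,C_{r_j})\notin S$; (A6) for all $r_i,r_j\in R$, if $subject\_to(r_i,r_j)\in M$, $legally\_valid(r_i,C_{r_i})\in S$, and there is $k\in I$ containing $C_{r_i}$ and $C_{r_j}$ as two distinct elements with $is\_legal(k\setminus\{C_{r_j}\})\subseteq S$, then $legally\_valid(r_j,C_{r_j})\notin S$; (A7) for all $r\in R$, if $S\models is\_legal(pre\_con(r))$ but $legally\_valid(r,C_r)\notin S$, then this exclusion is forced by one of (A4)–(A6), i.e. there is $r'\in R$ such that either $despite(r,r')\in M$ and $S\models is\_legal(pre\_con(r'))$; or $strong\_subject\_to(r',r)\in M$ and $legally\_valid(r',C_{r'})\in S$; or $subject\_to(r',r)\in M$, $legally\_valid(r',C_{r'})\in S$ and some $k\in I$ contains $C_{r'}$ and $C_r$ as distinct elements with $is\_legal(k\setminus\{C_r\})\subseteq S$. The program $ASP_{Config}$ (atoms of the configuration are used as ground terms; $R,C,R1,C1,X,Y$ are variables; $not$ is negation as failure) consists of: the fact $is\_legal(f).$ for each $f\in F$; each element of $M$ as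 a fact; for each rule $r$ with $pre\_con(r)=b_1\wedge\dots\wedge b_m\wedge not\ b_{m+1}\wedge\dots\wedge not\ b_n$ the rule $according\_to(r,C_r)\leftarrow is\_legal(b_1),\dots,is\_legal(b_m),not\ is\_legal(b_{m+1}),\dots,not\ is\_legal(b_n).$; for each $k=\{a_1,\dots,a_n\}\in I$ and each $1\le i<j\le n$ the rule $opposes(a_i,a_j)\leftarrow is\_legal(a_l)$ for all $l\notin\{i,j\}$; and the rules $opposes(X,Y)\leftarrow opposes(Y,X).$ $defeated(R,C,R1)\leftarrow according\_to(R,C),according\_to(R1,C1),despite(R,R1).$ $defeated(R,C,R1)\leftarrow according\_to(R,C),legally\_valid(R1,C1),opposes(C,C1),subject\_to(R1,R).$ $defeated(R,C,R1)\leftarrow according\_to(R,C),legally\_valid(R1,C1),strong\_subject\_to(R1,R).$ $not\_legally\_valid(R)\leftarrow defeated(R,C,R1).$ $legally\_valid(R,C)\leftarrow according\_to(R,C),not\ not\_legally\_valid(R).$ $is\_legal(C)\leftarrow legally\_valid(R,C).$ Answer sets are the stable models of (the ground instantiation of) this program under the standard stable model semantics. *)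

theory Defs
  imports Main
begin

datatype 'r meta = Despite 'r 'r | SubjectTo 'r 'r | StrongSubjectTo 'r 'r

text \<open>Rules are identified by their ids (type 'r);
  each rule r has a precondition given by its positive atoms pre_pos r
  (b_1..b_m) and its negated atoms pre_neg r (b_{m+1}..b_n), and a conclusion concl r.\<close>
record ('a, 'r) config =
  rules   :: "'r set"
  pre_pos :: "'r \<Rightarrow> 'a set"
  pre_neg :: "'r \<Rightarrow> 'a set"
  concl   :: "'r \<Rightarrow> 'a"
  facts   :: "'a set"
  meta    :: "'r meta set"
  incons  :: "'a set set"

definition wf_config :: "('a, 'r) config \<Rightarrow> bool" where
  "wf_config Cfg \<longleftrightarrow>
     finite (rules Cfg) \<and> finite (facts Cfg) \<and> finite (meta Cfg) \<and> finite (incons Cfg) \<and>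
     (\<forall>r \<in> rules Cfg. finite (pre_pos Cfg r) \<and> finite (pre_neg Cfg r)) \<and>
     (\<forall>k \<in> incons Cfg. finite k \<and> card k \<ge> 2) \<and>
     (\<forall>m \<in> meta Cfg. case m of
         Despite ri rj \<Rightarrow> ri \<in> rules Cfg \<and> rj \<in> rules Cfg
       | SubjectTo ri rj \<Rightarrow> ri \<in> rules Cfg \<and> rj \<in> rules Cfg
       | StrongSubjectTo ri rj \<Rightarrow> ri \<in> rules Cfg \<and> rj \<in> rules Cfg)"

datatype ('a, 'r) gatom =
    IsLegal 'a
  | LegallyValid 'r 'a
  | AccordingTo 'r 'a
  | Opposes 'a 'a
  | Defeated 'r 'a 'r
  | NotLegallyValid 'r
  | Meta "'r meta"

text \<open>A ground rule: head, positive body, negative (default-negated) body.\<close>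
type_synonym ('a, 'r) grule = "('a, 'r) gatom \<times> ('a, 'r) gatom set \<times> ('a, 'r) gatom set"

definition reduct :: "('a, 'r) grule set \<Rightarrow> ('a, 'r) gatom set
                       \<Rightarrow> (('a, 'r) gatom \<times> ('a, 'r) gatom set) set" where
  "reduct P A = {(h, pos). \<exists>neg. (h, pos, neg) \<in> P \<and> neg \<inter> A = {}}"

definition closed_under :: "(('a, 'r) gatom \<times> ('a, 'r) gatom set) set \<Rightarrow> ('a, 'r) gatom set \<Rightarrow> bool" where
  "closed_under Q S \<longleftrightarrow> (\<forall>(h, pos) \<in> Q. pos \<subseteq> S \<longrightarrow> h \<in> S)"

definition least_model :: "(('a, 'r) gatom \<times> ('a, 'r) gatom set) set \<Rightarrow> ('a, 'r) gatom set" where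
  "least_model Q = \<Inter>{S. closed_under Q S}"

definition answer_set :: "('a, 'r) grule set \<Rightarrow> ('a, 'r) gatom set \<Rightarrow> bool" where
  "answer_set P A \<longleftrightarrow> A = least_model (reduct P A)"

definition asp_program :: "('a, 'r) config \<Rightarrow> ('a, 'r) grule set" where
  "asp_program Cfg =
     {(IsLegal f, {}, {}) | f. f \<in> facts Cfg}
   \<union> {(Meta m, {}, {}) | m. m \<in> meta Cfg}
   \<union> {(AccordingTo r (concl Cfg r), IsLegal ` pre_pos Cfg r, IsLegal ` pre_neg Cfg r) | r. r \<in> rules Cfg}
   \<union> {(Opposes a b, IsLegal ` (k - {a, b}), {}) | k a b. k \<in> incons Cfg \<and> a \<in> k \<and> b \<in> k \<and> a \<noteq> b}
   \<union> {(Opposes x y, {Opposes y x}, {}) | x y. True}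
   \<union> {(Defeated r c r1, {AccordingTo r c, AccordingTo r1 c1, Meta (Despite r r1)}, {}) | r c r1 c1. True}
   \<union> {(Defeated r c r1, {AccordingTo r c, LegallyValid r1 c1, Opposes c c1, Meta (SubjectTo r1 r)}, {})
        | r c r1 c1. True}
   \<union> {(Defeated r c r1, {AccordingTo r c, LegallyValid r1 c1, Meta (StrongSubjectTo r1 r)}, {})
        | r c r1 c1. True}
   \<union> {(NotLegallyValid r, {Defeated r c r1}, {}) | r c r1. True}
   \<union> {(LegallyValid r c, {AccordingTo r c}, {NotLegallyValid r}) | r c. True}
   \<union> {(IsLegal c, {LegallyValid r c}, {}) | r c. True}"

definition sat_pre :: "('a, 'r) config \<Rightarrow> ('a, 'r) gatom set \<Rightarrow> 'r \<Rightarrow> bool" where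
  "sat_pre Cfg S r \<longleftrightarrow> IsLegal ` pre_pos Cfg r \<subseteq> S \<and> IsLegal ` pre_neg Cfg r \<inter> S = {}"

fun legal_kind :: "('a, 'r) gatom \<Rightarrow> bool" where
  "legal_kind (IsLegal _) = True"
| "legal_kind (LegallyValid _ _) = True"
| "legal_kind _ = False"

definition opp_cond :: "('a, 'r) config \<Rightarrow> ('a, 'r) gatom set \<Rightarrow> 'r \<Rightarrow> 'r \<Rightarrow> bool" where
  "opp_cond Cfg S ri rj \<longleftrightarrow>
     (\<exists>k \<in> incons Cfg. concl Cfg ri \<in> k \<and> concl Cfg rj \<in> k \<and> concl Cfg ri \<noteq> concl Cfg rj \<and>
        IsLegal ` (k - {concl Cfg rj}) \<subseteq> S)"

definition legal_model :: "('a, 'r) config \<Rightarrow> ('a, 'r) gatom set \<Rightarrow> bool" where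
  "legal_model Cfg S \<longleftrightarrow>
     (\<forall>x \<in> S. legal_kind x) \<and>
     \<comment> \<open>A1\<close>
     (\<forall>f \<in> facts Cfg. IsLegal f \<in> S) \<and>
     \<comment> \<open>A2\<close>
     (\<forall>r \<in> rules Cfg. LegallyValid r (concl Cfg r) \<in> S \<longrightarrow>
         sat_pre Cfg S r \<and> IsLegal (concl Cfg r) \<in> S) \<and>
     \<comment> \<open>A3\<close>
     (\<forall>c. IsLegal c \<in> S \<longrightarrow>
         c \<in> facts Cfg \<or> (\<exists>r \<in> rules Cfg. LegallyValid r (concl Cfg r) \<in> S \<and> c = concl Cfg r)) \<and>
     \<comment> \<open>A4\<close>
     (\<forall>ri \<in> rules Cfg. \<forall>rj \<in> rules Cfg.
         Despite ri rj \<in> meta Cfg \<and> sat_pre Cfg S rj \<longrightarrow> LegallyValid ri (concl Cfg ri) \<notin> S) \<and>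
     \<comment> \<open>A5\<close>
     (\<forall>ri \<in> rules Cfg. \<forall>rj \<in> rules Cfg.
         StrongSubjectTo ri rj \<in> meta Cfg \<and> LegallyValid ri (concl Cfg ri) \<in> S
           \<longrightarrow> LegallyValid rj (concl Cfg rj) \<notin> S) \<and>
     \<comment> \<open>A6\<close>
     (\<forall>ri \<in> rules Cfg. \<forall>rj \<in> rules Cfg.
         SubjectTo ri rj \<in> meta Cfg \<and> LegallyValid ri (concl Cfg ri) \<in> S \<and> opp_cond Cfg S ri rj
           \<longrightarrow> LegallyValid rj (concl Cfg rj) \<notin> S) \<and>
     \<comment> \<open>A7\<close>
     (\<forall>r \<in> rules Cfg. sat_pre Cfg S r \<and> LegallyValid r (concl Cfg r) \<notin> S \<longrightarrow>
         (\<exists>r' \<in> rules Cfg.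
             (Despite r r' \<in> meta Cfg \<and> sat_pre Cfg S r')
           \<or> (StrongSubjectTo r' r \<in> meta Cfg \<and> LegallyValid r' (concl Cfg r') \<in> S)
           \<or> (SubjectTo r' r \<in> meta Cfg \<and> LegallyValid r' (concl Cfg r') \<in> S \<and> opp_cond Cfg S r' r)))"

end

theory Submission
  imports Defs
begin

lemma aux: "(h, pos) \<in> Q \<Longrightarrow> pos \<subseteq> \<Inter>{S. closed_under Q S} \<Longrightarrow> h \<in> \<Inter>{S. closed_under Q S}"
  unfolding closed_under_def by blast
lemma inter_closed: "closed_under Q (\<Inter>{S. closed_under Q S})"
  unfolding closed_under_def[of Q "\<Inter>{S. closed_under Q S}"] using aux[of _ _ Q] by blast

lemma as_closed:
  assumes "answer_set P A"
  shows "closed_under (reduct P A) A"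
proof -
  have "A = \<Inter>{S. closed_under (reduct P A) S}"
    using assms unfolding answer_set_def least_model_def by simp
  then show ?thesis using inter_closed[of "reduct P A"] by simp
qed

lemma as_least:
  assumes "answer_set P A" "closed_under (reduct P A) X"
  shows "A \<subseteq> X"
proof -
  have "A = \<Inter>{S. closed_under (reduct P A) S}"
    using assms unfolding answer_set_def least_model_def by simp
  then show ?thesis using assms(2) by blast
qed

lemma as_rule:
  assumes "answer_set P A" "(h, pos, neg) \<in> P" "pos \<subseteq> A" "neg \<inter> A = {}"
  shows "h \<in> A"
proof -
  have "(h, pos) \<in> reduct P A" unfolding reduct_def using assms(2,4) by blast
  moreover have "closed_under (reduct P A) A" using as_closed[OF assms(1)] .
  ultimately show ?thesis using assms(3) unfolding closed_under_def by fast
qed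

lemma as_support:
  assumes "answer_set P A" "h \<in> A"
  shows "\<exists>pos neg. (h, pos, neg) \<in> P \<and> pos \<subseteq> A \<and> neg \<inter> A = {}"
proof (rule ccontr)
  assume n: "\<not> ?thesis"
  have "closed_under (reduct P A) (A - {h})"
    unfolding closed_under_def
  proof (intro ballI, clarify)
    fix h' pos
    assume "(h', pos) \<in> reduct P A" and r3: "pos \<subseteq> A - {h}"
    then obtain neg where r1: "(h', pos, neg) \<in> P" and r2: "neg \<inter> A = {}"
      unfolding reduct_def by blast
    have posA: "pos \<subseteq> A" using r3 by blast
    have hA: "h' \<in> A" using as_rule[OF assms(1) r1 posA r2] .
    have "h' \<noteq> h"
    proof
      assume "h' = h"
      then have "(h, pos, neg) \<in> P \<and> pos \<subseteq> A \<and> neg \<inter> A = {}" using r1 posA r2 by simp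
      then show False using n by blast
    qed
    then show "h' \<in> A - {h}" using hA by blast
  qed
  then have "A \<subseteq> A - {h}" using as_least[OF assms(1)] by blast
  then show False using assms(2) by blast
qed

lemma inv_opp:
  assumes "(Opposes x y, pos, neg) \<in> asp_program Cfg"
  shows "(\<exists>k\<in>incons Cfg. x \<in> k \<and> y \<in> k \<and> x \<noteq> y \<and> pos = IsLegal ` (k - {x, y})) \<or> pos = {Opposes y x}"
  using assms unfolding asp_program_def by auto

lemma inv_il:
  assumes "(IsLegal c, pos, neg) \<in> asp_program Cfg"
  shows "c \<in> facts Cfg \<or> (\<exists>r. pos = {LegallyValid r c})"
  using assms unfolding asp_program_def by auto

lemma inv_lv:
  assumes "(LegallyValid r c, pos, neg) \<in> asp_program Cfg"
  shows "pos = {AccordingTo r c} \<and> neg = {NotLegallyValid r}"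
  using assms unfolding asp_program_def by auto

lemma inv_at:
  assumes "(AccordingTo r c, pos, neg) \<in> asp_program Cfg"
  shows "r \<in> rules Cfg \<and> c = concl Cfg r \<and> pos = IsLegal ` pre_pos Cfg r \<and> neg = IsLegal ` pre_neg Cfg r"
  using assms unfolding asp_program_def by auto

lemma inv_nlv:
  assumes "(NotLegallyValid r, pos, neg) \<in> asp_program Cfg"
  shows "\<exists>c r1. pos = {Defeated r c r1}"
  using assms unfolding asp_program_def by auto

lemma inv_meta:
  assumes "(Meta m, pos, neg) \<in> asp_program Cfg"
  shows "m \<in> meta Cfg"
  using assms unfolding asp_program_def by auto

lemma inv_def:
  assumes "(Defeated r c r1, pos, neg) \<in> asp_program Cfg"
  shows "\<exists>c1. pos = {AccordingTo r c, AccordingTo r1 c1, Meta (Despite r r1)}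
     \<or> pos = {AccordingTo r c, LegallyValid r1 c1, Opposes c c1, Meta (SubjectTo r1 r)}
     \<or> pos = {AccordingTo r c, LegallyValid r1 c1, Meta (StrongSubjectTo r1 r)}"
  using assms unfolding asp_program_def
  by (elim UnE CollectE exE conjE; simp only: prod.inject gatom.inject gatom.distinct simp_thms; blast)

definition direct :: "('a, 'r) config \<Rightarrow> ('a, 'r) gatom set \<Rightarrow> 'a \<Rightarrow> 'a \<Rightarrow> bool" where
  "direct Cfg A a b \<longleftrightarrow> (\<exists>k\<in>incons Cfg. a \<in> k \<and> b \<in> k \<and> a \<noteq> b \<and> IsLegal ` (k - {a, b}) \<subseteq> A)"

lemma as_opposes:
  fixes Cfg :: "('a, 'r) config" and A :: "('a, 'r) gatom set"
  assumes as: "answer_set (asp_program Cfg) A" and oab: "Opposes a b \<in> A"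
  shows "direct Cfg A a b \<or> direct Cfg A b a"
proof -
  define B :: "('a, 'r) gatom set" where "B = {Opposes x y | x y. \<not> (direct Cfg A x y \<or> direct Cfg A y x)}"
  have inB: "Opposes x y \<in> B" if "\<not> (direct Cfg A x y \<or> direct Cfg A y x)" for x y
    unfolding B_def using that by blast
  have cl: "closed_under (reduct (asp_program Cfg) A) (A - B)"
    unfolding closed_under_def reduct_def
  proof (clarify)
    fix h' pos neg
    assume r1: "(h', pos, neg) \<in> asp_program Cfg" and r2: "neg \<inter> A = {}" and r3: "pos \<subseteq> A - B"
    have posA: "pos \<subseteq> A" using r3 by (meson Diff_subset subset_trans)
    have hA: "h' \<in> A" using as_rule[OF as r1 posA r2] .
    have "h' \<notin> B"
    proof
      assume "h' \<in> B"
      then obtain x y where h: "h' = Opposes x y" and nd: "\<not> (direct Cfg A x y \<or> direct Cfg A y x)"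
        unfolding B_def by blast
      from r1 h have r1': "(Opposes x y, pos, neg) \<in> asp_program Cfg" by simp
      from inv_opp[OF r1'] show False
      proof
        assume "\<exists>k\<in>incons Cfg. x \<in> k \<and> y \<in> k \<and> x \<noteq> y \<and> pos = IsLegal ` (k - {x, y})"
        then obtain k where k: "k\<in>incons Cfg" "x \<in> k" "y \<in> k" "x \<noteq> y" "pos = IsLegal ` (k - {x, y})"
          by blast
        have "IsLegal ` (k - {x, y}) \<subseteq> A" using posA k(5) by simp
        then have "direct Cfg A x y" unfolding direct_def using k(1-4) by blast
        then show False using nd by blast
      next
        assume "pos = {Opposes y x}"
        then have "Opposes y x \<notin> B" using r3 by blast
        moreover have "Opposes y x \<in> B" using nd inB[of y x] by blast
        ultimately show False by blast
      qed
    qed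
    then show "h' \<in> A - B" using hA by blast
  qed
  have "A \<subseteq> A - B" using as_least[OF as cl] .
  then have "Opposes a b \<notin> B" using oab by blast
  then show ?thesis using inB[of a b] by blast
qed

lemma m1:
  assumes "f \<in> facts Cfg"
  shows "(IsLegal f, {}, {}) \<in> asp_program Cfg"
proof -
  have "(IsLegal f, {}, {}) \<in> {(IsLegal f, {}, {}) | f. f \<in> facts Cfg}" using assms by blast
  then show ?thesis unfolding asp_program_def Un_iff by iprover
qed

lemma m2:
  assumes "m \<in> meta Cfg"
  shows "(Meta m, {}, {}) \<in> asp_program Cfg"
proof -
  have "(Meta m, {}, {}) \<in> {(Meta m, {}, {}) | m. m \<in> meta Cfg}" using assms by blast
  then show ?thesis unfolding asp_program_def Un_iff by iprover
qed

lemma m3: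
  assumes "r \<in> rules Cfg"
  shows "(AccordingTo r (concl Cfg r), IsLegal ` pre_pos Cfg r, IsLegal ` pre_neg Cfg r) \<in> asp_program Cfg"
proof -
  have "(AccordingTo r (concl Cfg r), IsLegal ` pre_pos Cfg r, IsLegal ` pre_neg Cfg r) \<in> {(AccordingTo r (concl Cfg r), IsLegal ` pre_pos Cfg r, IsLegal ` pre_neg Cfg r) | r. r \<in> rules Cfg}" using assms by blast
  then show ?thesis unfolding asp_program_def Un_iff by iprover
qed

lemma m4:
  assumes "k \<in> incons Cfg \<and> a \<in> k \<and> b \<in> k \<and> a \<noteq> b"
  shows "(Opposes a b, IsLegal ` (k - {a, b}), {}) \<in> asp_program Cfg"
proof -
  have "(Opposes a b, IsLegal ` (k - {a, b}), {}) \<in> {(Opposes a b, IsLegal ` (k - {a, b}), {}) | k a b. k \<in> incons Cfg \<and> a \<in> k \<and> b \<in> k \<and> a \<noteq> b}" using assms by blast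
  then show ?thesis unfolding asp_program_def Un_iff by iprover
qed

lemma m5:
  shows "(Opposes x y, {Opposes y x}, {}) \<in> asp_program Cfg"
proof -
  have "(Opposes x y, {Opposes y x}, {}) \<in> {(Opposes x y, {Opposes y x}, {}) | x y. True}" by blast
  then show ?thesis unfolding asp_program_def Un_iff by iprover
qed

lemma m6:
  shows "(Defeated r c r1, {AccordingTo r c, AccordingTo r1 c1, Meta (Despite r r1)}, {}) \<in> asp_program Cfg"
proof -
  have "(Defeated r c r1, {AccordingTo r c, AccordingTo r1 c1, Meta (Despite r r1)}, {}) \<in> {(Defeated r c r1, {AccordingTo r c, AccordingTo r1 c1, Meta (Despite r r1)}, {}) | r c r1 c1. True}" by blast
  then show ?thesis unfolding asp_program_def Un_iff by iprover
qed

lemma m7: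
  shows "(Defeated r c r1, {AccordingTo r c, LegallyValid r1 c1, Opposes c c1, Meta (SubjectTo r1 r)}, {}) \<in> asp_program Cfg"
proof -
  have "(Defeated r c r1, {AccordingTo r c, LegallyValid r1 c1, Opposes c c1, Meta (SubjectTo r1 r)}, {}) \<in> {(Defeated r c r1, {AccordingTo r c, LegallyValid r1 c1, Opposes c c1, Meta (SubjectTo r1 r)}, {}) | r c r1 c1. True}" by blast
  then show ?thesis unfolding asp_program_def Un_iff by iprover
qed

lemma m8:
  shows "(Defeated r c r1, {AccordingTo r c, LegallyValid r1 c1, Meta (StrongSubjectTo r1 r)}, {}) \<in> asp_program Cfg"
proof -
  have "(Defeated r c r1, {AccordingTo r c, LegallyValid r1 c1, Meta (StrongSubjectTo r1 r)}, {}) \<in> {(Defeated r c r1, {AccordingTo r c, LegallyValid r1 c1, Meta (StrongSubjectTo r1 r)}, {}) | r c r1 c1. True}" by blast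
  then show ?thesis unfolding asp_program_def Un_iff by iprover
qed

lemma m9:
  shows "(NotLegallyValid r, {Defeated r c r1}, {}) \<in> asp_program Cfg"
proof -
  have "(NotLegallyValid r, {Defeated r c r1}, {}) \<in> {(NotLegallyValid r, {Defeated r c r1}, {}) | r c r1. True}" by blast
  then show ?thesis unfolding asp_program_def Un_iff by iprover
qed

lemma m10:
  shows "(LegallyValid r c, {AccordingTo r c}, {NotLegallyValid r}) \<in> asp_program Cfg"
proof -
  have "(LegallyValid r c, {AccordingTo r c}, {NotLegallyValid r}) \<in> {(LegallyValid r c, {AccordingTo r c}, {NotLegallyValid r}) | r c. True}" by blast
  then show ?thesis unfolding asp_program_def Un_iff by iprover
qed

lemma m11:
  shows "(IsLegal c, {LegallyValid r c}, {}) \<in> asp_program Cfg"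
proof -
  have "(IsLegal c, {LegallyValid r c}, {}) \<in> {(IsLegal c, {LegallyValid r c}, {}) | r c. True}" by blast
  then show ?thesis unfolding asp_program_def Un_iff by iprover
qed

lemma sat_pre_filter: "sat_pre Cfg {x \<in> A. legal_kind x} r = sat_pre Cfg A r"
  unfolding sat_pre_def by auto

lemma il_sub: "IsLegal ` X \<subseteq> {x \<in> A. legal_kind x} \<longleftrightarrow> IsLegal ` X \<subseteq> A"
  by auto

lemma opp_cond_filter: "opp_cond Cfg {x \<in> A. legal_kind x} r r' = opp_cond Cfg A r r'"
  unfolding opp_cond_def il_sub ..


locale AS =
  fixes Cfg :: "('a, 'r) config" and A :: "('a, 'r) gatom set"
  assumes as: "answer_set (asp_program Cfg) A"
begin

lemma cl: "(h, pos, neg) \<in> asp_program Cfg \<Longrightarrow> pos \<subseteq> A \<Longrightarrow> neg \<inter> A = {} \<Longrightarrow> h \<in> A"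
  using as_rule[OF as] by blast

lemma sup: "h \<in> A \<Longrightarrow> \<exists>pos neg. (h, pos, neg) \<in> asp_program Cfg \<and> pos \<subseteq> A \<and> neg \<inter> A = {}"
  using as_support[OF as] by blast

lemma meta_iff: "Meta m \<in> A \<longleftrightarrow> m \<in> meta Cfg"
proof
  assume "Meta m \<in> A"
  then obtain pos neg where "(Meta m, pos, neg) \<in> asp_program Cfg" using sup by blast
  then show "m \<in> meta Cfg" by (rule inv_meta)
next
  assume "m \<in> meta Cfg"
  then show "Meta m \<in> A" using cl[OF m2[of m Cfg]] by simp
qed

lemma at_iff: "AccordingTo r c \<in> A \<longleftrightarrow> r \<in> rules Cfg \<and> c = concl Cfg r \<and> sat_pre Cfg A r"
proof
  assume "AccordingTo r c \<in> A"
  then obtain pos neg where p: "(AccordingTo r c, pos, neg) \<in> asp_program Cfg" "pos \<subseteq> A" "neg \<inter> A = {}"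
    using sup by blast
  from inv_at[OF p(1)] have i: "r \<in> rules Cfg" "c = concl Cfg r" "pos = IsLegal ` pre_pos Cfg r"
    "neg = IsLegal ` pre_neg Cfg r" by auto
  have "sat_pre Cfg A r" unfolding sat_pre_def using p(2,3) i(3,4) by simp
  then show "r \<in> rules Cfg \<and> c = concl Cfg r \<and> sat_pre Cfg A r" using i by simp
next
  assume h: "r \<in> rules Cfg \<and> c = concl Cfg r \<and> sat_pre Cfg A r"
  then have "IsLegal ` pre_pos Cfg r \<subseteq> A" "IsLegal ` pre_neg Cfg r \<inter> A = {}"
    unfolding sat_pre_def by auto
  then have "AccordingTo r (concl Cfg r) \<in> A" using cl[OF m3[of r Cfg]] h by simp
  then show "AccordingTo r c \<in> A" using h by simp
qed

lemma lv_d: "LegallyValid r c \<in> A \<Longrightarrow> AccordingTo r c \<in> A \<and> NotLegallyValid r \<notin> A"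
proof -
  assume "LegallyValid r c \<in> A"
  then obtain pos neg where p: "(LegallyValid r c, pos, neg) \<in> asp_program Cfg" "pos \<subseteq> A" "neg \<inter> A = {}"
    using sup by blast
  from inv_lv[OF p(1)] have "pos = {AccordingTo r c}" "neg = {NotLegallyValid r}" by auto
  then show ?thesis using p(2,3) by simp
qed

lemma lv_i: "AccordingTo r c \<in> A \<Longrightarrow> NotLegallyValid r \<notin> A \<Longrightarrow> LegallyValid r c \<in> A"
  using cl[OF m10[of r c Cfg]] by simp

lemma il_lv: "LegallyValid r c \<in> A \<Longrightarrow> IsLegal c \<in> A"
  using cl[OF m11[of c r Cfg]] by simp

lemma nlv_d: "NotLegallyValid r \<in> A \<Longrightarrow> \<exists>c r1. Defeated r c r1 \<in> A"
proof -
  assume "NotLegallyValid r \<in> A"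
  then obtain pos neg where p: "(NotLegallyValid r, pos, neg) \<in> asp_program Cfg" "pos \<subseteq> A" "neg \<inter> A = {}"
    using sup by blast
  from inv_nlv[OF p(1)] obtain c r1 where "pos = {Defeated r c r1}" by blast
  then show ?thesis using p(2) by auto
qed

lemma def_nlv: "Defeated r c r1 \<in> A \<Longrightarrow> NotLegallyValid r \<in> A"
  using cl[OF m9[of r c r1 Cfg]] by simp

lemma def_d:
  assumes hd: "Defeated r c r1 \<in> A"
  shows "AccordingTo r c \<in> A \<and> (\<exists>c1. (AccordingTo r1 c1 \<in> A \<and> Despite r r1 \<in> meta Cfg)
     \<or> (LegallyValid r1 c1 \<in> A \<and> Opposes c c1 \<in> A \<and> SubjectTo r1 r \<in> meta Cfg)
     \<or> (LegallyValid r1 c1 \<in> A \<and> StrongSubjectTo r1 r \<in> meta Cfg))"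
proof -
  obtain pos neg where p: "(Defeated r c r1, pos, neg) \<in> asp_program Cfg" "pos \<subseteq> A" "neg \<inter> A = {}"
    using sup hd by blast
  from inv_def[OF p(1)] obtain c1 where
    "pos = {AccordingTo r c, AccordingTo r1 c1, Meta (Despite r r1)}
   \<or> pos = {AccordingTo r c, LegallyValid r1 c1, Opposes c c1, Meta (SubjectTo r1 r)}
   \<or> pos = {AccordingTo r c, LegallyValid r1 c1, Meta (StrongSubjectTo r1 r)}" by blast
  then show ?thesis
  proof (elim disjE)
    assume "pos = {AccordingTo r c, AccordingTo r1 c1, Meta (Despite r r1)}"
    then show ?thesis using p(2) meta_iff by (simp; blast)
  next
    assume "pos = {AccordingTo r c, LegallyValid r1 c1, Opposes c c1, Meta (SubjectTo r1 r)}"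
    then show ?thesis using p(2) meta_iff by (simp; blast)
  next
    assume "pos = {AccordingTo r c, LegallyValid r1 c1, Meta (StrongSubjectTo r1 r)}"
    then show ?thesis using p(2) meta_iff by (simp; blast)
  qed
qed

lemma nlv_not: "Defeated r c' r1 \<in> A \<Longrightarrow> LegallyValid r c \<notin> A"
  using lv_d def_nlv by blast

end

theorem lemma4:
  fixes Cfg :: "('a, 'r) config" and A :: "('a, 'r) gatom set"
  assumes "wf_config Cfg"
    and "answer_set (asp_program Cfg) A"
  shows "legal_model Cfg {x \<in> A. legal_kind x}"
proof -
  let ?P = "asp_program Cfg"
  let ?S = "{x \<in> A. legal_kind x}"
  interpret AS Cfg A using assms(2) by unfold_locales
  note as = assms(2)
  show ?thesis
    unfolding legal_model_def sat_pre_filter opp_cond_filter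
  proof (intro conjI)
    show "\<forall>x\<in>?S. legal_kind x" by blast
    show "\<forall>f\<in>facts Cfg. IsLegal f \<in> ?S" using cl[OF m1] by simp
    show "\<forall>r\<in>rules Cfg. LegallyValid r (concl Cfg r) \<in> ?S \<longrightarrow>
        sat_pre Cfg A r \<and> IsLegal (concl Cfg r) \<in> ?S"
    proof (intro ballI impI)
      fix r assume "r \<in> rules Cfg" and h: "LegallyValid r (concl Cfg r) \<in> ?S"
      then have lv: "LegallyValid r (concl Cfg r) \<in> A" by simp
      have "AccordingTo r (concl Cfg r) \<in> A" using lv_d[OF lv] by simp
      then have "sat_pre Cfg A r" unfolding at_iff by simp
      moreover have "IsLegal (concl Cfg r) \<in> A" using il_lv[OF lv] .
      ultimately show "sat_pre Cfg A r \<and> IsLegal (concl Cfg r) \<in> ?S" by simp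
    qed
    show "\<forall>c. IsLegal c \<in> ?S \<longrightarrow>
         c \<in> facts Cfg \<or> (\<exists>r\<in>rules Cfg. LegallyValid r (concl Cfg r) \<in> ?S \<and> c = concl Cfg r)"
    proof (intro allI impI)
      fix c assume "IsLegal c \<in> ?S"
      then have "IsLegal c \<in> A" by simp
      then obtain pos neg where p: "(IsLegal c, pos, neg) \<in> ?P" "pos \<subseteq> A" "neg \<inter> A = {}"
        using sup by blast
      from inv_il[OF p(1)] show "c \<in> facts Cfg \<or> (\<exists>r\<in>rules Cfg. LegallyValid r (concl Cfg r) \<in> ?S \<and> c = concl Cfg r)"
      proof
        assume "\<exists>r. pos = {LegallyValid r c}"
        then obtain r where pr: "pos = {LegallyValid r c}" by blast
        then have lv: "LegallyValid r c \<in> A" using p(2) by simp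
        have "AccordingTo r c \<in> A" using lv_d[OF lv] by simp
        then have rr: "r \<in> rules Cfg" and cc: "c = concl Cfg r" unfolding at_iff by simp_all
        have "LegallyValid r (concl Cfg r) \<in> ?S" using lv cc by simp
        then show ?thesis using rr cc by blast
      qed simp
    qed
    show "\<forall>ri\<in>rules Cfg. \<forall>rj\<in>rules Cfg.
         Despite ri rj \<in> meta Cfg \<and> sat_pre Cfg A rj \<longrightarrow> LegallyValid ri (concl Cfg ri) \<notin> ?S"
    proof (intro ballI impI)
      fix ri rj assume "ri \<in> rules Cfg" "rj \<in> rules Cfg" and h: "Despite ri rj \<in> meta Cfg \<and> sat_pre Cfg A rj"
      show "LegallyValid ri (concl Cfg ri) \<notin> ?S"
      proof
        assume "LegallyValid ri (concl Cfg ri) \<in> ?S"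
        then have a: "AccordingTo ri (concl Cfg ri) \<in> A" using lv_d by blast
        have b: "AccordingTo rj (concl Cfg rj) \<in> A" using at_iff h \<open>rj \<in> rules Cfg\<close> by blast
        have "Defeated ri (concl Cfg ri) rj \<in> A"
          using cl[OF m6[of ri "concl Cfg ri" rj "concl Cfg rj"]] a b h by (simp add: meta_iff)
        then show False using nlv_not \<open>LegallyValid ri (concl Cfg ri) \<in> ?S\<close> by blast
      qed
    qed
    show "\<forall>ri\<in>rules Cfg. \<forall>rj\<in>rules Cfg.
         StrongSubjectTo ri rj \<in> meta Cfg \<and> LegallyValid ri (concl Cfg ri) \<in> ?S
           \<longrightarrow> LegallyValid rj (concl Cfg rj) \<notin> ?S"
    proof (intro ballI impI)
      fix ri rj assume "ri \<in> rules Cfg" "rj \<in> rules Cfg"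
        and h: "StrongSubjectTo ri rj \<in> meta Cfg \<and> LegallyValid ri (concl Cfg ri) \<in> ?S"
      show "LegallyValid rj (concl Cfg rj) \<notin> ?S"
      proof
        assume j: "LegallyValid rj (concl Cfg rj) \<in> ?S"
        then have a: "AccordingTo rj (concl Cfg rj) \<in> A" using lv_d by blast
        have "Defeated rj (concl Cfg rj) ri \<in> A"
          using cl[OF m8[of rj "concl Cfg rj" ri "concl Cfg ri"]] a h by (simp add: meta_iff)
        then show False using nlv_not j by blast
      qed
    qed
    show "\<forall>ri\<in>rules Cfg. \<forall>rj\<in>rules Cfg.
         SubjectTo ri rj \<in> meta Cfg \<and> LegallyValid ri (concl Cfg ri) \<in> ?S \<and> opp_cond Cfg A ri rj
           \<longrightarrow> LegallyValid rj (concl Cfg rj) \<notin> ?S"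
    proof (intro ballI impI)
      fix ri rj assume "ri \<in> rules Cfg" "rj \<in> rules Cfg"
        and h: "SubjectTo ri rj \<in> meta Cfg \<and> LegallyValid ri (concl Cfg ri) \<in> ?S \<and> opp_cond Cfg A ri rj"
      show "LegallyValid rj (concl Cfg rj) \<notin> ?S"
      proof
        assume j: "LegallyValid rj (concl Cfg rj) \<in> ?S"
        then have a: "AccordingTo rj (concl Cfg rj) \<in> A" using lv_d by blast
        have ili: "IsLegal (concl Cfg ri) \<in> A" using h il_lv by blast
        obtain k where k: "k \<in> incons Cfg" "concl Cfg ri \<in> k" "concl Cfg rj \<in> k"
          "concl Cfg ri \<noteq> concl Cfg rj" "IsLegal ` (k - {concl Cfg rj}) \<subseteq> A"
          using h unfolding opp_cond_def by blast
        have "IsLegal ` (k - {concl Cfg ri, concl Cfg rj}) \<subseteq> A" using k(5) by blast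
        then have "Opposes (concl Cfg ri) (concl Cfg rj) \<in> A"
          using cl[OF m4[of k Cfg]] k(1-4) by blast
        then have o: "Opposes (concl Cfg rj) (concl Cfg ri) \<in> A"
          using cl[OF m5] by blast
        have "Defeated rj (concl Cfg rj) ri \<in> A"
          using cl[OF m7[of rj "concl Cfg rj" ri "concl Cfg ri"]] a h o by (simp add: meta_iff)
        then show False using nlv_not j by blast
      qed
    qed
    show "\<forall>r\<in>rules Cfg. sat_pre Cfg A r \<and> LegallyValid r (concl Cfg r) \<notin> ?S \<longrightarrow>
         (\<exists>r'\<in>rules Cfg.
             (Despite r r' \<in> meta Cfg \<and> sat_pre Cfg A r')
           \<or> (StrongSubjectTo r' r \<in> meta Cfg \<and> LegallyValid r' (concl Cfg r') \<in> ?S)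
           \<or> (SubjectTo r' r \<in> meta Cfg \<and> LegallyValid r' (concl Cfg r') \<in> ?S \<and> opp_cond Cfg A r' r))"
    proof (intro ballI impI)
      fix r assume r: "r \<in> rules Cfg" and h: "sat_pre Cfg A r \<and> LegallyValid r (concl Cfg r) \<notin> ?S"
      have a: "AccordingTo r (concl Cfg r) \<in> A" unfolding at_iff using r h by simp
      have "LegallyValid r (concl Cfg r) \<notin> A" using h by simp
      then have "NotLegallyValid r \<in> A" using lv_i[OF a] by blast
      then obtain c r1 where d: "Defeated r c r1 \<in> A" using nlv_d by blast
      note dd = def_d[OF d]
      have "AccordingTo r c \<in> A" using dd by simp
      then have c: "c = concl Cfg r" unfolding at_iff by simp
      from dd obtain c1 where
        cs: "(AccordingTo r1 c1 \<in> A \<and> Despite r r1 \<in> meta Cfg)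
     \<or> (LegallyValid r1 c1 \<in> A \<and> Opposes c c1 \<in> A \<and> SubjectTo r1 r \<in> meta Cfg)
     \<or> (LegallyValid r1 c1 \<in> A \<and> StrongSubjectTo r1 r \<in> meta Cfg)" by blast
      let ?G = "\<lambda>r'. (Despite r r' \<in> meta Cfg \<and> sat_pre Cfg A r')
           \<or> (StrongSubjectTo r' r \<in> meta Cfg \<and> LegallyValid r' (concl Cfg r') \<in> ?S)
           \<or> (SubjectTo r' r \<in> meta Cfg \<and> LegallyValid r' (concl Cfg r') \<in> ?S \<and> opp_cond Cfg A r' r)"
      have "r1 \<in> rules Cfg \<and> ?G r1"
      proof -
        from cs show ?thesis
        proof (elim disjE conjE)
          assume a1: "AccordingTo r1 c1 \<in> A" and m: "Despite r r1 \<in> meta Cfg"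
          from a1 have "r1 \<in> rules Cfg" "sat_pre Cfg A r1" unfolding at_iff by simp_all
          then show ?thesis using m by simp
        next
          assume l1: "LegallyValid r1 c1 \<in> A" and m: "StrongSubjectTo r1 r \<in> meta Cfg"
          have "AccordingTo r1 c1 \<in> A" using lv_d[OF l1] by simp
          then have "r1 \<in> rules Cfg" "c1 = concl Cfg r1" unfolding at_iff by simp_all
          then show ?thesis using m l1 by simp
        next
          assume l1: "LegallyValid r1 c1 \<in> A" and o: "Opposes c c1 \<in> A" and m: "SubjectTo r1 r \<in> meta Cfg"
          have "AccordingTo r1 c1 \<in> A" using lv_d[OF l1] by simp
          then have r1: "r1 \<in> rules Cfg" and c1: "c1 = concl Cfg r1" unfolding at_iff by simp_all
          have il1: "IsLegal c1 \<in> A" using il_lv[OF l1] .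
          have "\<exists>k. k \<in> incons Cfg \<and> c \<in> k \<and> c1 \<in> k \<and> c \<noteq> c1 \<and> IsLegal ` (k - {c, c1}) \<subseteq> A"
          proof -
            from as_opposes[OF as o] show ?thesis
            proof
              assume "direct Cfg A c c1"
              then show ?thesis unfolding direct_def by blast
            next
              assume "direct Cfg A c1 c"
              then obtain k where "k \<in> incons Cfg" "c1 \<in> k" "c \<in> k" "c1 \<noteq> c" "IsLegal ` (k - {c1, c}) \<subseteq> A"
                unfolding direct_def by blast
              moreover have "{c1, c} = {c, c1}" by (rule insert_commute)
              ultimately show ?thesis by auto
            qed
          qed
          then obtain k where k: "k \<in> incons Cfg" "c \<in> k" "c1 \<in> k" "c \<noteq> c1"
            "IsLegal ` (k - {c, c1}) \<subseteq> A" by blast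
          have "IsLegal ` (k - {c}) \<subseteq> A"
          proof
            fix x :: "('a, 'r) gatom" assume "x \<in> IsLegal ` (k - {c})"
            then obtain y where y: "y \<in> k" "y \<noteq> c" "x = IsLegal y" by blast
            show "x \<in> A"
            proof (cases "y = c1")
              case True then show ?thesis using il1 y by simp
            next
              case False then have "x \<in> IsLegal ` (k - {c, c1})" using y by blast
              then show ?thesis using k(5) by blast
            qed
          qed
          then have "opp_cond Cfg A r1 r" unfolding opp_cond_def c[symmetric] c1[symmetric]
            using k(1-4) by blast
          then show ?thesis using r1 m l1 c1 by simp
        qed
      qed
      then show "\<exists>r'\<in>rules Cfg. ?G r'" by blast
    qed
  qed
qed

end
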